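(* Let $B\subset\mathcal S$ be nonempty, $\nu$ a probability measure on $\mathcal S$, $K>0$ and $(\Phi,\Psi)$ a Legendre–Fenchel pair of Young functions. Consider the statements (i) for all $A\subset\mathcal S\setminus B$: $\nu[A]\,\Psi^{-1}(K/\nu[A])\le C_\Psi\,\mathrm{cap}(A,B)$; (ii) for all $f\in\ell^2(\mu)$ with $f|_B\equiv0$: $\|f^2\|_{\Phi,\nu,K}\le C_\Phi\,\mathcal E(f)$. If (i) holds with a constant $C_\Psi>0$, then (ii) holds with $C_\Phi=4C_\Psi$. Conversely, if (ii) holds with a constant $C_\Phi>0$, then (i) holds with $C_\Psi=C_\Phi$. In particular the optimal constants satisfy $C_\Psi\le C_\Phi\le4C_\Psi$.
   Context: $\mathcal S$ countable; irreducible positive recurrent Markov chain on $\mathcal S$ with transition probabilities $p(x,y)$, reversible w.r.t. its invariant probability measure $\mu$; $\mathcal E(f)=\frac12\sum_{x,y}\mu(x)p(x,y)(f(x)-f(y))^2$; $\tau_A=\inf\{t>0:X(t)\in A\}$; $\mathrm{cap}(A,B)=\sum_{x\in A}\mu(x)\mathbb P_x[\tau_B<\tau_A]=\inf\{\mathcal E(g):g|_A=1,g|_B=0\}$, $\mathrm{cap}(\emptyset,B)=0$. Young function: convex $\Phi:[0,\infty)\to[0,\infty]$ with $\Phi(0)=\lim_{r\to0}\Phi(r)=0$, $\lim_{r\to\infty}\Phi(r)=\infty$; Legendre–Fenchel pair: $\Psi(r)=\sup_{s\ge0}\{sr-\Phi(s)\}$. $\Psi^{-1}(t)=\inf\{s\in[0,\infty]:\Psi(s)>t\}$.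 Orlicz norm $\|f\|_{\Phi,\nu,K}=\sup\{\mathbb E_\nu[|f|g]:g\ge0,\mathbb E_\nu[\Psi(g)]\le K\}$. Convention: the left side of (i) is $0$ when $\nu[A]=0$. *)

theory Defs
  imports "HOL-Probability.Probability"
begin

definition reversible_chain :: "('a::countable \<Rightarrow> 'a \<Rightarrow> real) \<Rightarrow> 'a pmf \<Rightarrow> bool" where
  "reversible_chain p \<mu> \<longleftrightarrow>
     (\<forall>x y. 0 \<le> p x y) \<and>
     (\<forall>x. ((\<lambda>y. p x y) has_sum 1) UNIV) \<and>
     (\<forall>x y. (x, y) \<in> {(u, v). 0 < p u v}\<^sup>*) \<and>
     (\<forall>x. 0 < pmf \<mu> x) \<and>
     (\<forall>y. ((\<lambda>x. pmf \<mu> x * p x y) has_sum pmf \<mu> y) UNIV) \<and>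
     (\<forall>x y. pmf \<mu> x * p x y = pmf \<mu> y * p y x)"

definition dirichlet_form :: "('a::countable \<Rightarrow> 'a \<Rightarrow> real) \<Rightarrow> 'a pmf \<Rightarrow> ('a \<Rightarrow> real) \<Rightarrow> ennreal" where
  "dirichlet_form p \<mu> f =
     ennreal (1/2) * (\<integral>\<^sup>+ xy. ennreal (pmf \<mu> (fst xy) * p (fst xy) (snd xy) *
                               (f (fst xy) - f (snd xy))\<^sup>2) \<partial>count_space UNIV)"

text \<open>Capacity via the Dirichlet principle: cap(A,B) = inf { E(g) : g|A = 1, g|B = 0 }.\<close>
definition capacity :: "('a::countable \<Rightarrow> 'a \<Rightarrow> real) \<Rightarrow> 'a pmf \<Rightarrow> 'a set \<Rightarrow> 'a set \<Rightarrow> ennreal" where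
  "capacity p \<mu> A B =
     (INF g \<in> {g. (\<forall>x\<in>A. g x = 1) \<and> (\<forall>x\<in>B. g x = 0)}. dirichlet_form p \<mu> g)"

text \<open>Young function on [0,\<infinity>) with values in [0,\<infinity>] (only values at r \<ge> 0 matter).\<close>
definition young_function :: "(real \<Rightarrow> ennreal) \<Rightarrow> bool" where
  "young_function \<Phi> \<longleftrightarrow>
     (\<forall>a\<ge>0. \<forall>b\<ge>0. \<forall>t\<in>{0..1}.
        \<Phi> ((1 - t) * a + t * b) \<le> ennreal (1 - t) * \<Phi> a + ennreal t * \<Phi> b) \<and>
     \<Phi> 0 = 0 \<and> (\<Phi> \<longlongrightarrow> 0) (at_right 0) \<and> (\<Phi> \<longlongrightarrow> \<infinity>) at_top"

definition lf_conj :: "(real \<Rightarrow> ennreal) \<Rightarrow> real \<Rightarrow> ennreal" where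
  "lf_conj \<Phi> r = (SUP s \<in> {0..}. e2ennreal (ereal (s * r) - enn2ereal (\<Phi> s)))"

text \<open>Generalised inverse: Psi^{-1}(t) = inf { s \<in> [0,\<infinity>] : Psi(s) > t }, with Psi(\<infinity>) = \<infinity>.\<close>
definition gen_inv :: "(real \<Rightarrow> ennreal) \<Rightarrow> ennreal \<Rightarrow> ennreal" where
  "gen_inv \<Psi> t = Inf ({ennreal s | s. 0 \<le> s \<and> t < \<Psi> s} \<union> {\<infinity>})"

definition orlicz_norm :: "(real \<Rightarrow> ennreal) \<Rightarrow> 'a pmf \<Rightarrow> real \<Rightarrow> ('a \<Rightarrow> real) \<Rightarrow> ennreal" where
  "orlicz_norm \<Phi> \<nu> K h =
     (SUP g \<in> {g. (\<forall>x. 0 \<le> g x) \<and> (\<integral>\<^sup>+ x. lf_conj \<Phi> (g x) \<partial>measure_pmf \<nu>) \<le> ennreal K}.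
        \<integral>\<^sup>+ x. ennreal (\<bar>h x\<bar> * g x) \<partial>measure_pmf \<nu>)"

definition cap_ineq :: "('a::countable \<Rightarrow> 'a \<Rightarrow> real) \<Rightarrow> 'a pmf \<Rightarrow> 'a set \<Rightarrow> 'a pmf \<Rightarrow> real
    \<Rightarrow> (real \<Rightarrow> ennreal) \<Rightarrow> real \<Rightarrow> bool" where
  "cap_ineq p \<mu> B \<nu> K \<Psi> C \<longleftrightarrow>
     (\<forall>A. A \<subseteq> - B \<longrightarrow>
        (if measure_pmf.prob \<nu> A = 0 then 0
         else ennreal (measure_pmf.prob \<nu> A) * gen_inv \<Psi> (ennreal (K / measure_pmf.prob \<nu> A)))
        \<le> ennreal C * capacity p \<mu> A B)"

definition orlicz_ineq :: "('a::countable \<Rightarrow> 'a \<Rightarrow> real) \<Rightarrow> 'a pmf \<Rightarrow> 'a set \<Rightarrow> 'a pmf \<Rightarrow> real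
    \<Rightarrow> (real \<Rightarrow> ennreal) \<Rightarrow> real \<Rightarrow> bool" where
  "orlicz_ineq p \<mu> B \<nu> K \<Phi> C \<longleftrightarrow>
     (\<forall>f. (\<lambda>x. pmf \<mu> x * (f x)\<^sup>2) summable_on UNIV \<longrightarrow> (\<forall>x\<in>B. f x = 0) \<longrightarrow>
        orlicz_norm \<Phi> \<nu> K (\<lambda>x. (f x)\<^sup>2) \<le> ennreal C * dirichlet_form p \<mu> f)"

end

theory Submission
  imports Defs
begin


lemma log_aux:
  fixes x :: real assumes "1 \<le> x"
  shows "0 \<le> x\<^sup>2 - 4*x + 3 + 2 * ln x"
proof -
  let ?h = "\<lambda>x::real. x\<^sup>2 - 4*x + 3 + 2 * ln x"
  have "?h 1 \<le> ?h x"
  proof (rule DERIV_nonneg_imp_nondecreasing[OF assms])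
    fix t :: real assume t: "1 \<le> t" "t \<le> x"
    have "(?h has_real_derivative (2*t - 4 + 2 / t)) (at t)"
      using t by (auto intro!: derivative_eq_intros)
    moreover have "0 \<le> 2*t - 4 + 2 / t"
    proof -
      have "2*t - 4 + 2 / t = 2 * (t-1)\<^sup>2 / t" using t
        by (simp add: field_simps power2_eq_square)
      thus ?thesis using t by simp
    qed
    ultimately show "\<exists>y. (?h has_real_derivative y) (at t) \<and> 0 \<le> y" by blast
  qed
  thus ?thesis by simp
qed

lemma key_real:
  fixes a b :: real assumes "0 < a" "a \<le> b"
  shows "2*(b - a) - 2*a*ln (b/a) \<le> 4*(sqrt b - sqrt a)\<^sup>2"
proof -
  define x where "x = sqrt b / sqrt a"
  have sa: "sqrt a > 0" using assms by simp
  have x1: "1 \<le> x" using assms unfolding x_def by (simp add: real_sqrt_le_iff)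
  have bx: "sqrt b = x * sqrt a" unfolding x_def using sa by simp
  have "b / a = x\<^sup>2" using assms unfolding x_def by (simp add: power_divide)
  hence lnba: "ln (b/a) = 2 * ln x" using x1 by (simp add: ln_realpow)
  have b: "b = x\<^sup>2 * a" using bx assms by (metis power_mult_distrib real_sqrt_pow2 less_imp_le order_trans)
  have "4*(sqrt b - sqrt a)\<^sup>2 - (2*(b - a) - 2*a*ln (b/a)) = 2*a*(x\<^sup>2 - 4*x + 3 + 2 * ln x)"
    unfolding lnba using b bx assms
    by (simp add: power2_eq_square algebra_simps)
  also have "\<dots> \<ge> 0" using log_aux[OF x1] assms by simp
  finally show ?thesis by simp
qed

lemma tail_int:
  fixes b c :: real assumes "0 < b" "0 \<le> c"
  shows "(\<integral>\<^sup>+s\<in>{b..}. ennreal (c / s\<^sup>2) \<partial>lborel) = ennreal (c / b)"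
proof -
  have "(\<integral>\<^sup>+s\<in>{b..}. ennreal (c / s\<^sup>2) \<partial>lborel) = ennreal (0 - (- c / b))"
  proof (rule nn_integral_FTC_atLeast[where F="\<lambda>s. - c / s"])
    show "(\<lambda>s. c / s\<^sup>2) \<in> borel_measurable borel" by measurable
    fix x assume "b \<le> x"
    hence x: "x > 0" using assms by simp
    show "((\<lambda>s. - c / s) has_real_derivative c / x\<^sup>2) (at x)"
      using x by (auto intro!: derivative_eq_intros simp: power2_eq_square field_simps)
    show "0 \<le> c / x\<^sup>2" using assms by simp
  next
    show "((\<lambda>s. - c / s) \<longlongrightarrow> 0) at_top"
      by (intro tendsto_divide_0[OF tendsto_const] filterlim_at_top_imp_at_infinity filterlim_ident)
  qed
  thus ?thesis by simp
qed

lemma mid_int: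
  fixes a b :: real assumes "0 < a" "a \<le> b"
  shows "(\<integral>\<^sup>+s. ennreal ((s - a)\<^sup>2 / s\<^sup>2) * indicator {a..b} s \<partial>lborel)
         = ennreal ((b - 2*a*ln b - a\<^sup>2/b) - (a - 2*a*ln a - a\<^sup>2/a))"
proof (rule nn_integral_FTC_Icc[where F="\<lambda>s. s - 2*a*ln s - a\<^sup>2/s"])
  show "(\<lambda>s. (s - a)\<^sup>2 / s\<^sup>2) \<in> borel_measurable borel" by measurable
  fix x assume "x \<in> {a..b}"
  hence x: "x > 0" using assms by simp
  show "((\<lambda>s. s - 2*a*ln s - a\<^sup>2/s) has_real_derivative (x - a)\<^sup>2 / x\<^sup>2) (at x)"
    using x by (auto intro!: derivative_eq_intros simp: power2_eq_square field_simps)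
  show "0 \<le> (x - a)\<^sup>2 / x\<^sup>2" by simp
qed (use assms in auto)

lemma level_pt:
  fixes a b s :: real assumes "0 \<le> a" "a \<le> b" "0 < s"
  shows "((min a s - min b s)/s)\<^sup>2 \<le> (if a \<le> s \<and> s \<le> b then (s-a)\<^sup>2/s\<^sup>2 else 0)
            + (if b \<le> s then (b-a)\<^sup>2/s\<^sup>2 else 0)"
proof -
  consider "s \<le> a" | "a \<le> s" "s \<le> b" | "b \<le> s" by linarith
  thus ?thesis
  proof cases
    case 1
    hence "min a s = s" "min b s = s" using assms by auto
    thus ?thesis by simp
  next
    case 2
    hence "min a s = a" "min b s = s" using assms by auto
    hence "((min a s - min b s)/s)\<^sup>2 = (s-a)\<^sup>2/s\<^sup>2" by (simp add: power_divide power2_commute)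
    moreover have "0 \<le> (if b \<le> s then (b-a)\<^sup>2/s\<^sup>2 else 0)" by simp
    ultimately show ?thesis using 2 by simp
  next
    case 3 thus ?thesis using assms by (simp add: min_def power_divide power2_commute)
  qed
qed

lemma level_int:
  fixes a b :: real assumes "0 \<le> a" "a \<le> b"
  shows "(\<integral>\<^sup>+s\<in>{0<..}. ennreal (((min a s - min b s)/s)\<^sup>2) \<partial>lborel) \<le> ennreal (4*(sqrt b - sqrt a)\<^sup>2)"
proof (cases "a = 0")
  case False
  hence a: "0 < a" using assms by simp
  have b: "0 < b" using a assms by simp
  have "(\<integral>\<^sup>+s\<in>{0<..}. ennreal (((min a s - min b s)/s)\<^sup>2) \<partial>lborel)
     \<le> (\<integral>\<^sup>+s. ennreal ((s - a)\<^sup>2 / s\<^sup>2) * indicator {a..b} s + ennreal ((b-a)\<^sup>2 / s\<^sup>2) * indicator {b..} s \<partial>lborel)"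
  proof (rule nn_integral_mono)
    fix s :: real
    show "ennreal (((min a s - min b s)/s)\<^sup>2) * indicator {0<..} s
      \<le> ennreal ((s - a)\<^sup>2 / s\<^sup>2) * indicator {a..b} s + ennreal ((b-a)\<^sup>2 / s\<^sup>2) * indicator {b..} s"
    proof (cases "0 < s")
      case True
      have "ennreal (((min a s - min b s)/s)\<^sup>2) \<le> ennreal ((if a \<le> s \<and> s \<le> b then (s-a)\<^sup>2/s\<^sup>2 else 0)
            + (if b \<le> s then (b-a)\<^sup>2/s\<^sup>2 else 0))"
        using level_pt[OF assms True] by (rule ennreal_leI)
      also have "\<dots> = ennreal ((s - a)\<^sup>2 / s\<^sup>2) * indicator {a..b} s + ennreal ((b-a)\<^sup>2 / s\<^sup>2) * indicator {b..} s"
        by (cases "a \<le> s \<and> s \<le> b"; cases "b \<le> s") (simp_all add: indicator_def flip: ennreal_plus)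
      finally show ?thesis using True by simp
    qed simp
  qed
  also have "\<dots> = (\<integral>\<^sup>+s. ennreal ((s - a)\<^sup>2 / s\<^sup>2) * indicator {a..b} s \<partial>lborel)
       + (\<integral>\<^sup>+s\<in>{b..}. ennreal ((b-a)\<^sup>2 / s\<^sup>2) \<partial>lborel)"
    by (rule nn_integral_add) auto
  also have "\<dots> = ennreal ((b - 2*a*ln b - a\<^sup>2/b) - (a - 2*a*ln a - a\<^sup>2/a)) + ennreal ((b-a)\<^sup>2 / b)"
    using mid_int[OF a assms(2)] tail_int[OF b] by simp
  also have "\<dots> = ennreal (2*(b - a) - 2*a*ln (b/a))"
  proof -
    have e: "(b - 2*a*ln b - a\<^sup>2/b) - (a - 2*a*ln a - a\<^sup>2/a) + (b-a)\<^sup>2 / b = 2*(b - a) - 2*a*ln (b/a)"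
      using a b by (simp add: ln_div field_simps power2_eq_square)
    have "0 \<le> (b - 2*a*ln b - a\<^sup>2/b) - (a - 2*a*ln a - a\<^sup>2/a)"
    proof -
      let ?F = "\<lambda>s. s - 2*a*ln s - a\<^sup>2/s"
      have "?F a \<le> ?F b"
      proof (rule DERIV_nonneg_imp_nondecreasing[OF assms(2)])
        fix x assume x: "a \<le> x" "x \<le> b"
        hence "x > 0" using a by simp
        hence "(?F has_real_derivative (x - a)\<^sup>2 / x\<^sup>2) (at x)"
          by (auto intro!: derivative_eq_intros simp: power2_eq_square field_simps)
        thus "\<exists>y. (?F has_real_derivative y) (at x) \<and> 0 \<le> y" by auto
      qed
      thus ?thesis by simp
    qed
    hence "ennreal ((b - 2*a*ln b - a\<^sup>2/b) - (a - 2*a*ln a - a\<^sup>2/a)) + ennreal ((b-a)\<^sup>2 / b)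
       = ennreal ((b - 2*a*ln b - a\<^sup>2/b) - (a - 2*a*ln a - a\<^sup>2/a) + (b-a)\<^sup>2 / b)"
      using b by (intro ennreal_plus[symmetric]) auto
    also have "\<dots> = ennreal (2*(b - a) - 2*a*ln (b/a))" by (simp only: e)
    finally show ?thesis .
  qed
  also have "\<dots> \<le> ennreal (4*(sqrt b - sqrt a)\<^sup>2)"
    using key_real[OF a assms(2)] by (rule ennreal_leI)
  finally show ?thesis .
next
  case True
  show ?thesis
  proof (cases "b = 0")
    case True
    thus ?thesis using \<open>a = 0\<close> by (simp add: min_def)
  next
    case False
    hence b: "0 < b" using assms by simp
    have "(\<integral>\<^sup>+s\<in>{0<..}. ennreal (((min a s - min b s)/s)\<^sup>2) \<partial>lborel)
       \<le> (\<integral>\<^sup>+s. indicator {0..b} s + ennreal (b\<^sup>2 / s\<^sup>2) * indicator {b..} s \<partial>lborel)"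
    proof (rule nn_integral_mono)
      fix s :: real
      show "ennreal (((min a s - min b s)/s)\<^sup>2) * indicator {0<..} s
        \<le> indicator {0..b} s + ennreal (b\<^sup>2 / s\<^sup>2) * indicator {b..} s"
      proof (cases "0 < s")
        case True
        show ?thesis
        proof (cases "s \<le> b")
          case True
          hence "((min a s - min b s)/s)\<^sup>2 = 1" using \<open>0 < s\<close> \<open>a = 0\<close> by (simp add: min_def)
          thus ?thesis using \<open>0 < s\<close> True by simp
        next
          case False
          hence "((min a s - min b s)/s)\<^sup>2 = b\<^sup>2 / s\<^sup>2" using \<open>0 < s\<close> \<open>a = 0\<close> b by (simp add: min_def power_divide)
          thus ?thesis using \<open>0 < s\<close> False by simp
        qed
      qed simp
    qed
    also have "\<dots> = (\<integral>\<^sup>+s. indicator {0..b} s \<partial>lborel) + (\<integral>\<^sup>+s\<in>{b..}. ennreal (b\<^sup>2 / s\<^sup>2) \<partial>lborel)"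
      by (rule nn_integral_add) auto
    also have "\<dots> = ennreal b + ennreal (b\<^sup>2 / b)"
      using tail_int[OF b, of "b\<^sup>2"] b by simp
    also have "\<dots> = ennreal (2 * b)" using b by (simp add: power2_eq_square ennreal_plus[symmetric])
    also have "\<dots> \<le> ennreal (4*(sqrt b - sqrt a)\<^sup>2)"
      using \<open>a = 0\<close> b by (intro ennreal_leI) simp
    finally show ?thesis .
  qed
qed



lemma fy_pt:
  fixes \<Phi> :: "real \<Rightarrow> ennreal"
  assumes u: "0 \<le> u" and phi: "\<Phi> u = ennreal \<phi>" "0 \<le> \<phi>" and t: "0 \<le> t"
  shows "ennreal (u * t) \<le> lf_conj \<Phi> t + ennreal \<phi>"
proof -
  have "e2ennreal (ereal (u * t) - enn2ereal (\<Phi> u)) \<le> lf_conj \<Phi> t"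
    unfolding lf_conj_def using u by (intro SUP_upper) auto
  moreover have "e2ennreal (ereal (u * t) - enn2ereal (\<Phi> u)) = ennreal (u*t - \<phi>)"
    using phi by (simp add: e2ennreal_ereal)
  moreover have "ennreal (u * t) \<le> ennreal (u*t - \<phi>) + ennreal \<phi>"
  proof (cases "0 \<le> u*t - \<phi>")
    case True thus ?thesis using phi by (simp flip: ennreal_plus)
  next
    case False thus ?thesis using phi by (simp add: ennreal_neg add_increasing2 ennreal_leI)
  qed
  ultimately show ?thesis by (metis (no_types, lifting) add_right_mono order_trans)
qed

lemma fenchel_bound:
  fixes \<Phi> \<Psi> :: "real \<Rightarrow> ennreal" and \<nu> :: "'a pmf" and g :: "'a \<Rightarrow> real"
  assumes conj: "\<And>r. 0 \<le> r \<Longrightarrow> \<Psi> r = lf_conj \<Phi> r"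
    and K: "0 < K" and g0: "\<And>x. 0 \<le> g x"
    and gK: "(\<integral>\<^sup>+x. lf_conj \<Phi> (g x) \<partial>measure_pmf \<nu>) \<le> ennreal K"
    and PA: "measure_pmf.prob \<nu> A \<noteq> 0"
  shows "(\<integral>\<^sup>+x. ennreal (g x) * indicator A x \<partial>measure_pmf \<nu>)
     \<le> ennreal (measure_pmf.prob \<nu> A) * gen_inv \<Psi> (ennreal (K / measure_pmf.prob \<nu> A))"
proof -
  define P where "P = measure_pmf.prob \<nu> A"
  define L where "L = (\<integral>\<^sup>+x. ennreal (g x) * indicator A x \<partial>measure_pmf \<nu>)"
  define c where "c = K / P"
  have P: "0 < P" using PA unfolding P_def by (simp add: zero_less_measure_iff)
  have c: "0 < c" using P K unfolding c_def by simp
  have key: "L \<le> ennreal P * ennreal s" if s: "0 \<le> s" "ennreal c < \<Psi> s" for s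
  proof -
    have "ennreal c < (SUP u \<in> {0..}. e2ennreal (ereal (u * s) - enn2ereal (\<Phi> u)))"
      using s conj[OF s(1)] unfolding lf_conj_def by simp
    then obtain u where u: "0 \<le> u" and cu: "ennreal c < e2ennreal (ereal (u * s) - enn2ereal (\<Phi> u))"
      by (auto simp: less_SUP_iff)
    have "\<Phi> u \<noteq> \<infinity>"
    proof
      assume "\<Phi> u = \<infinity>"
      hence "e2ennreal (ereal (u * s) - enn2ereal (\<Phi> u)) = 0" by (simp add: e2ennreal_neg)
      thus False using cu by simp
    qed
    then obtain \<phi> where phi: "\<Phi> u = ennreal \<phi>" "0 \<le> \<phi>" by (cases "\<Phi> u") auto
    have "e2ennreal (ereal (u * s) - enn2ereal (\<Phi> u)) = ennreal (u* s - \<phi>)"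
      using phi by (simp add: e2ennreal_ereal)
    hence cl: "c < u* s - \<phi>" using cu c by (simp add: ennreal_less_iff)
    have "0 < u * s" using cl c phi(2) by linarith
    hence "u \<noteq> 0" by auto
    hence u0: "0 < u" using u by simp
    have "ennreal u * L = (\<integral>\<^sup>+x. ennreal u * (ennreal (g x) * indicator A x) \<partial>measure_pmf \<nu>)"
      unfolding L_def by (rule nn_integral_cmult[symmetric]) simp
    also have "\<dots> \<le> (\<integral>\<^sup>+x. lf_conj \<Phi> (g x) + ennreal \<phi> * indicator A x \<partial>measure_pmf \<nu>)"
    proof (rule nn_integral_mono)
      fix x
      have "ennreal (u * g x) \<le> lf_conj \<Phi> (g x) + ennreal \<phi>" by (rule fy_pt[where \<Phi>=\<Phi>, OF u phi g0[of x]])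
      thus "ennreal u * (ennreal (g x) * indicator A x) \<le> lf_conj \<Phi> (g x) + ennreal \<phi> * indicator A x"
        using u g0[of x] by (auto split: split_indicator simp: ennreal_mult)
    qed
    also have "\<dots> = (\<integral>\<^sup>+x. lf_conj \<Phi> (g x) \<partial>measure_pmf \<nu>) + ennreal \<phi> * emeasure (measure_pmf \<nu>) A"
      by (subst nn_integral_add) (auto simp: nn_integral_cmult_indicator)
    also have "\<dots> \<le> ennreal K + ennreal \<phi> * ennreal P"
      using gK by (intro add_mono) (auto simp: P_def measure_pmf.emeasure_eq_measure)
    also have "\<dots> = ennreal (K + \<phi> * P)" using phi P K by (simp add: ennreal_mult ennreal_plus)
    also have "\<dots> \<le> ennreal (u * (P * s))"
    proof (rule ennreal_leI)
      have "K = c * P" using P unfolding c_def by simp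
      also have "\<dots> \<le> (u* s - \<phi>) * P" using cl P by simp
      finally show "K + \<phi> * P \<le> u * (P * s)" by (simp add: algebra_simps)
    qed
    also have "\<dots> = ennreal u * (ennreal P * ennreal s)" using u P s by (simp add: ennreal_mult)
    finally show ?thesis using u0 by (subst (asm) ennreal_mult_le_mult_iff) auto
  qed
  define T where "T = {ennreal s |s. 0 \<le> s \<and> ennreal c < \<Psi> s} \<union> {\<infinity>}"
  have "ennreal (1/P) * L \<le> Inf T"
  proof (rule Inf_greatest)
    fix y assume "y \<in> T"
    then consider "y = \<infinity>" | s where "y = ennreal s" "0 \<le> s" "ennreal c < \<Psi> s" unfolding T_def by auto
    thus "ennreal (1/P) * L \<le> y"
    proof cases
      case 1 thus ?thesis by simp
    next
      case 2
      have "ennreal (1/P) * L \<le> ennreal (1/P) * (ennreal P * ennreal s)"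
        using key[OF 2(2,3)] by (rule mult_left_mono) simp
      also have "\<dots> = ennreal s" using P
        by (simp add: ennreal_mult[symmetric] mult.assoc[symmetric])
      finally show ?thesis using 2 by simp
    qed
  qed
  hence "ennreal P * (ennreal (1/P) * L) \<le> ennreal P * Inf T" by (rule mult_left_mono) simp
  moreover have "ennreal P * (ennreal (1/P) * L) = L" using P
    by (simp add: ennreal_mult[symmetric] mult.assoc[symmetric])
  ultimately show ?thesis unfolding gen_inv_def T_def L_def P_def c_def by simp
qed



lemma cap_le:
  fixes g :: "'a::countable \<Rightarrow> real"
  assumes "\<And>x. x \<in> A \<Longrightarrow> g x = 1" "\<And>x. x \<in> B \<Longrightarrow> g x = 0"
  shows "capacity p \<mu> A B \<le> dirichlet_form p \<mu> g"
  unfolding capacity_def using assms by (intro INF_lower) auto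

lemma clip_dirichlet:
  fixes g :: "'a::countable \<Rightarrow> real"
  assumes p0: "\<And>x y. 0 \<le> p x y"
  shows "dirichlet_form p \<mu> (\<lambda>x. max 0 (min 1 (g x))) \<le> dirichlet_form p \<mu> g"
  unfolding dirichlet_form_def
proof (rule mult_left_mono, rule nn_integral_mono, rule ennreal_leI)
  fix xy :: "'a \<times> 'a"
  have w: "0 \<le> pmf \<mu> (fst xy) * p (fst xy) (snd xy)" using p0 by simp
  have "(max 0 (min 1 (g (fst xy))) - max 0 (min 1 (g (snd xy))))\<^sup>2 \<le> (g (fst xy) - g (snd xy))\<^sup>2"
    by (rule abs_le_square_iff[THEN iffD1]) (auto simp: max_def min_def abs_if)
  thus "pmf \<mu> (fst xy) * p (fst xy) (snd xy) * (max 0 (min 1 (g (fst xy))) - max 0 (min 1 (g (snd xy))))\<^sup>2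
      \<le> pmf \<mu> (fst xy) * p (fst xy) (snd xy) * (g (fst xy) - g (snd xy))\<^sup>2"
    using w by (rule mult_left_mono)
qed simp

lemma pmf_summable: "pmf \<mu> summable_on UNIV"
  by (rule abs_summable_summable[OF abs_summable_equivalent[THEN iffD2, OF pmf_abs_summable]])

lemma orlicz_lower:
  fixes \<Phi> \<Psi> :: "real \<Rightarrow> ennreal" and \<nu> :: "'a pmf"
  assumes conj: "\<And>r. 0 \<le> r \<Longrightarrow> \<Psi> r = lf_conj \<Phi> r" and Psi0: "\<Psi> 0 = 0"
    and K: "0 < K" and h: "\<And>x. x \<in> A \<Longrightarrow> h x = 1"
    and PA: "measure_pmf.prob \<nu> A \<noteq> 0"
  shows "ennreal (measure_pmf.prob \<nu> A) * gen_inv \<Psi> (ennreal (K / measure_pmf.prob \<nu> A))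
     \<le> orlicz_norm \<Phi> \<nu> K (\<lambda>x. (h x)\<^sup>2)"
proof -
  define P where "P = measure_pmf.prob \<nu> A"
  define c where "c = K / P"
  define N where "N = orlicz_norm \<Phi> \<nu> K (\<lambda>x. (h x)\<^sup>2)"
  define T where "T = {ennreal s |s. 0 \<le> s \<and> ennreal c < \<Psi> s} \<union> {\<infinity>}"
  have P: "0 < P" using PA unfolding P_def by (simp add: zero_less_measure_iff)
  have "Inf T \<le> ennreal (1/P) * N"
  proof (rule dense_le)
    fix y assume y: "y < Inf T"
    have "y < top" using y by (rule less_le_trans) simp
    hence "y \<noteq> \<infinity>" by simp
    then obtain t where t: "y = ennreal t" "0 \<le> t" by (cases y) auto
    have "\<not> ennreal c < \<Psi> t"
    proof
      assume "ennreal c < \<Psi> t"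
      hence "ennreal t \<in> T" unfolding T_def using t by auto
      hence "Inf T \<le> ennreal t" by (rule Inf_lower)
      thus False using y t by simp
    qed
    hence Pt: "\<Psi> t \<le> ennreal c" by simp
    define g0 where "g0 = (\<lambda>x. t * indicator A x :: real)"
    have "(\<integral>\<^sup>+x. lf_conj \<Phi> (g0 x) \<partial>measure_pmf \<nu>) = (\<integral>\<^sup>+x. \<Psi> t * indicator A x \<partial>measure_pmf \<nu>)"
      by (rule nn_integral_cong) (auto simp: g0_def conj[symmetric] t Psi0 split: split_indicator)
    also have "\<dots> = \<Psi> t * ennreal P"
      by (simp add: nn_integral_cmult_indicator P_def measure_pmf.emeasure_eq_measure)
    also have "\<dots> \<le> ennreal c * ennreal P" using Pt by (rule mult_right_mono) simp
    also have "\<dots> = ennreal K" using P K by (simp add: c_def flip: ennreal_mult)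
    finally have g0K: "(\<integral>\<^sup>+x. lf_conj \<Phi> (g0 x) \<partial>measure_pmf \<nu>) \<le> ennreal K" .
    have "(\<integral>\<^sup>+x. ennreal (\<bar>(h x)\<^sup>2\<bar> * g0 x) \<partial>measure_pmf \<nu>) \<le> N"
      unfolding N_def orlicz_norm_def using g0K t by (intro SUP_upper) (auto simp: g0_def)
    moreover have "(\<integral>\<^sup>+x. ennreal (\<bar>(h x)\<^sup>2\<bar> * g0 x) \<partial>measure_pmf \<nu>) = (\<integral>\<^sup>+x. ennreal t * indicator A x \<partial>measure_pmf \<nu>)"
      by (rule nn_integral_cong) (auto simp: g0_def h split: split_indicator)
    moreover have "\<dots> = ennreal t * ennreal P"
      by (simp add: nn_integral_cmult_indicator P_def measure_pmf.emeasure_eq_measure)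
    ultimately have "ennreal t * ennreal P \<le> N" by simp
    hence "ennreal (1/P) * (ennreal t * ennreal P) \<le> ennreal (1/P) * N" by (rule mult_left_mono) simp
    moreover have "ennreal (1/P) * (ennreal t * ennreal P) = ennreal t" using P t
      by (simp flip: ennreal_mult)
    ultimately show "y \<le> ennreal (1/P) * N" using t by simp
  qed
  hence "ennreal P * Inf T \<le> ennreal P * (ennreal (1/P) * N)" by (rule mult_left_mono) simp
  also have "\<dots> = N" using P by (simp add: ennreal_mult[symmetric] mult.assoc[symmetric])
  finally show ?thesis unfolding gen_inv_def T_def N_def P_def c_def by simp
qed

lemma dir2:
  fixes \<Phi> \<Psi> :: "real \<Rightarrow> ennreal" and \<nu> \<mu> :: "'a::countable pmf"
  assumes p0: "\<And>x y. 0 \<le> p x y"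
    and conj: "\<And>r. 0 \<le> r \<Longrightarrow> \<Psi> r = lf_conj \<Phi> r" and Psi0: "\<Psi> 0 = 0"
    and K: "0 < K" and C: "0 < C" and oi: "orlicz_ineq p \<mu> B \<nu> K \<Phi> C"
  shows "cap_ineq p \<mu> B \<nu> K \<Psi> C"
  unfolding cap_ineq_def
proof (intro allI impI)
  fix A assume AB: "A \<subseteq> - B"
  show "(if measure_pmf.prob \<nu> A = 0 then 0
         else ennreal (measure_pmf.prob \<nu> A) * gen_inv \<Psi> (ennreal (K / measure_pmf.prob \<nu> A)))
        \<le> ennreal C * capacity p \<mu> A B"
  proof (cases "measure_pmf.prob \<nu> A = 0")
    case PA: False
    define X where "X = ennreal (measure_pmf.prob \<nu> A) * gen_inv \<Psi> (ennreal (K / measure_pmf.prob \<nu> A))"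
    have "ennreal (1/C) * X \<le> capacity p \<mu> A B"
      unfolding capacity_def
    proof (rule INF_greatest)
      fix g :: "'a \<Rightarrow> real" assume "g \<in> {g. (\<forall>x\<in>A. g x = 1) \<and> (\<forall>x\<in>B. g x = 0)}"
      hence gA: "\<And>x. x \<in> A \<Longrightarrow> g x = 1" and gB: "\<And>x. x \<in> B \<Longrightarrow> g x = 0" by auto
      define h where "h = (\<lambda>x. max 0 (min 1 (g x)))"
      have hA: "\<And>x. x \<in> A \<Longrightarrow> h x = 1" using gA by (simp add: h_def)
      have hB: "\<forall>x\<in>B. h x = 0" using gB by (simp add: h_def)
      have hs: "(\<lambda>x. pmf \<mu> x * (h x)\<^sup>2) summable_on UNIV"
      proof (rule summable_on_comparison_test[OF pmf_summable])
        fix x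
        have "(h x)\<^sup>2 \<le> 1" unfolding h_def by (auto simp: max_def min_def power_le_one abs_square_le_1)
        thus "pmf \<mu> x * (h x)\<^sup>2 \<le> pmf \<mu> x" using mult_left_mono[of "(h x)\<^sup>2" 1 "pmf \<mu> x"] by simp
      qed simp
      have "X \<le> orlicz_norm \<Phi> \<nu> K (\<lambda>x. (h x)\<^sup>2)"
        unfolding X_def by (rule orlicz_lower[OF conj Psi0 K hA PA])
      also have "\<dots> \<le> ennreal C * dirichlet_form p \<mu> h"
        using oi hs hB unfolding orlicz_ineq_def by blast
      also have "\<dots> \<le> ennreal C * dirichlet_form p \<mu> g"
        unfolding h_def by (intro mult_left_mono clip_dirichlet p0) simp
      finally have "ennreal (1/C) * X \<le> ennreal (1/C) * (ennreal C * dirichlet_form p \<mu> g)"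
        by (rule mult_left_mono) simp
      also have "\<dots> = dirichlet_form p \<mu> g" using C
        by (simp add: ennreal_mult[symmetric] mult.assoc[symmetric])
      finally show "ennreal (1/C) * X \<le> dirichlet_form p \<mu> g" .
    qed
    hence "ennreal C * (ennreal (1/C) * X) \<le> ennreal C * capacity p \<mu> A B" by (rule mult_left_mono) simp
    moreover have "ennreal C * (ennreal (1/C) * X) = X" using C
      by (simp add: ennreal_mult[symmetric] mult.assoc[symmetric])
    ultimately show ?thesis using PA unfolding X_def by simp
  qed simp
qed



lemma layer:
  assumes "0 \<le> c" "0 \<le> G"
  shows "(\<integral>\<^sup>+s. ennreal G * indicator {0<..<c} s \<partial>lborel) = ennreal (c * G)"
  using assms by (simp add: nn_integral_cmult_indicator emeasure_lborel_Ioo ennreal_mult mult.commute)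

lemma fubini_pmf:
  fixes \<nu> :: "'a::countable pmf" and F :: "'a \<Rightarrow> real \<Rightarrow> ennreal"
  assumes [measurable]: "\<And>x. F x \<in> borel_measurable lborel"
  shows "(\<integral>\<^sup>+x. \<integral>\<^sup>+s. F x s \<partial>lborel \<partial>measure_pmf \<nu>) = (\<integral>\<^sup>+s. \<integral>\<^sup>+x. F x s \<partial>measure_pmf \<nu> \<partial>lborel)"
proof -
  have "(\<integral>\<^sup>+x. \<integral>\<^sup>+s. F x s \<partial>lborel \<partial>measure_pmf \<nu>)
      = (\<integral>\<^sup>+x. ennreal (pmf \<nu> x) * (\<integral>\<^sup>+s. F x s \<partial>lborel) \<partial>count_space UNIV)"
    by (rule nn_integral_measure_pmf)
  also have "\<dots> = (\<integral>\<^sup>+x. \<integral>\<^sup>+s. ennreal (pmf \<nu> x) * F x s \<partial>lborel \<partial>count_space UNIV)"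
    by (rule nn_integral_cong) (rule nn_integral_cmult[symmetric], measurable)
  also have "\<dots> = (\<integral>\<^sup>+s. \<integral>\<^sup>+x. ennreal (pmf \<nu> x) * F x s \<partial>count_space UNIV \<partial>lborel)"
    by (rule nn_integral_count_space_nn_integral[symmetric]) auto
  also have "\<dots> = (\<integral>\<^sup>+s. \<integral>\<^sup>+x. F x s \<partial>measure_pmf \<nu> \<partial>lborel)"
    by (rule nn_integral_cong) (rule nn_integral_measure_pmf[symmetric])
  finally show ?thesis .
qed

lemma level_sym:
  fixes a b :: real assumes "0 \<le> a" "0 \<le> b"
  shows "(\<integral>\<^sup>+s\<in>{0<..}. ennreal (((min a s - min b s)/s)\<^sup>2) \<partial>lborel) \<le> ennreal (4*(sqrt b - sqrt a)\<^sup>2)"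
proof (cases "a \<le> b")
  case True thus ?thesis using level_int assms by blast
next
  case False
  have "(\<integral>\<^sup>+s\<in>{0<..}. ennreal (((min a s - min b s)/s)\<^sup>2) \<partial>lborel)
      = (\<integral>\<^sup>+s\<in>{0<..}. ennreal (((min b s - min a s)/s)\<^sup>2) \<partial>lborel)"
    by (rule nn_integral_cong) (simp add: power_divide power2_commute)
  also have "\<dots> \<le> ennreal (4*(sqrt a - sqrt b)\<^sup>2)" using level_int[of b a] assms False by simp
  also have "\<dots> = ennreal (4*(sqrt b - sqrt a)\<^sup>2)" by (simp add: power2_commute)
  finally show ?thesis .
qed

lemma pair_bound:
  fixes u v w :: real assumes w: "0 \<le> w"
  shows "(\<integral>\<^sup>+s. indicator {0<..} s * ennreal (w * (min (u\<^sup>2) s / s - min (v\<^sup>2) s / s)\<^sup>2) \<partial>lborel)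
     \<le> ennreal (w * (4*(u - v)\<^sup>2))"
proof -
  have "(\<integral>\<^sup>+s. indicator {0<..} s * ennreal (w * (min (u\<^sup>2) s / s - min (v\<^sup>2) s / s)\<^sup>2) \<partial>lborel)
      = (\<integral>\<^sup>+s. ennreal w * (ennreal (((min (u\<^sup>2) s - min (v\<^sup>2) s)/s)\<^sup>2) * indicator {0<..} s) \<partial>lborel)"
    by (rule nn_integral_cong) (simp add: w ennreal_mult diff_divide_distrib mult_ac)
  also have "\<dots> = ennreal w * (\<integral>\<^sup>+s\<in>{0<..}. ennreal (((min (u\<^sup>2) s - min (v\<^sup>2) s)/s)\<^sup>2) \<partial>lborel)"
    by (rule nn_integral_cmult) measurable
  also have "\<dots> \<le> ennreal w * ennreal (4*(sqrt (v\<^sup>2) - sqrt (u\<^sup>2))\<^sup>2)"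
    by (rule mult_left_mono[OF level_sym]) auto
  also have "\<dots> \<le> ennreal w * ennreal (4*(u - v)\<^sup>2)"
  proof (rule mult_left_mono[OF ennreal_leI])
    have "(\<bar>v\<bar> - \<bar>u\<bar>)\<^sup>2 \<le> (u - v)\<^sup>2"
      by (rule abs_le_square_iff[THEN iffD1]) (auto simp: abs_if)
    thus "4*(sqrt (v\<^sup>2) - sqrt (u\<^sup>2))\<^sup>2 \<le> 4*(u - v)\<^sup>2" by simp
  qed simp
  also have "\<dots> = ennreal (w * (4*(u - v)\<^sup>2))" using w by (simp add: ennreal_mult)
  finally show ?thesis .
qed



lemma null_int:
  fixes \<nu> :: "'a pmf"
  assumes "measure_pmf.prob \<nu> A = 0"
  shows "(\<integral>\<^sup>+x. ennreal (g x) * indicator A x \<partial>measure_pmf \<nu>) = 0"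
proof -
  have "set_pmf \<nu> \<inter> A = {}" using assms by (simp add: measure_pmf_zero_iff)
  hence "AE x in measure_pmf \<nu>. ennreal (g x) * indicator A x = 0"
    by (auto simp: AE_measure_pmf_iff split: split_indicator)
  hence "(\<integral>\<^sup>+x. ennreal (g x) * indicator A x \<partial>measure_pmf \<nu>) = (\<integral>\<^sup>+x. 0 \<partial>measure_pmf \<nu>)"
    by (rule nn_integral_cong_AE)
  thus ?thesis by simp
qed

lemma dir1:
  fixes \<Phi> \<Psi> :: "real \<Rightarrow> ennreal" and \<nu> \<mu> :: "'a::countable pmf"
  assumes p0: "\<And>x y. 0 \<le> p x y"
    and conj: "\<And>r. 0 \<le> r \<Longrightarrow> \<Psi> r = lf_conj \<Phi> r"
    and K: "0 < K" and C: "0 < C" and ci: "cap_ineq p \<mu> B \<nu> K \<Psi> C"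
  shows "orlicz_ineq p \<mu> B \<nu> K \<Phi> (4 * C)"
  unfolding orlicz_ineq_def
proof (intro allI impI)
  fix f :: "'a \<Rightarrow> real"
  assume fB: "\<forall>x\<in>B. f x = 0"
  define \<psi> where "\<psi> = (\<lambda>s x. min ((f x)\<^sup>2) s / s)"
  define w where "w = (\<lambda>xy. pmf \<mu> (fst xy) * p (fst xy) (snd xy))"
  have w0: "\<And>xy. 0 \<le> w xy" unfolding w_def using p0 by simp
  show "orlicz_norm \<Phi> \<nu> K (\<lambda>x. (f x)\<^sup>2) \<le> ennreal (4 * C) * dirichlet_form p \<mu> f"
    unfolding orlicz_norm_def
  proof (rule SUP_least)
    fix g :: "'a \<Rightarrow> real"
    assume "g \<in> {g. (\<forall>x. 0 \<le> g x) \<and> (\<integral>\<^sup>+ x. lf_conj \<Phi> (g x) \<partial>measure_pmf \<nu>) \<le> ennreal K}"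
    hence g0: "\<And>x. 0 \<le> g x" and gK: "(\<integral>\<^sup>+ x. lf_conj \<Phi> (g x) \<partial>measure_pmf \<nu>) \<le> ennreal K" by auto
    have PB: "(\<integral>\<^sup>+x. ennreal (g x) * indicator {0<..<(f x)\<^sup>2} s \<partial>measure_pmf \<nu>)
        \<le> ennreal C * (indicator {0<..} s * dirichlet_form p \<mu> (\<psi> s))" for s :: real
    proof (cases "0 < s")
      case False
      hence "\<And>x. indicator {0<..<(f x)\<^sup>2} s = (0::ennreal)" by (simp add: indicator_def)
      thus ?thesis by simp
    next
      case True
      define A where "A = {x. s < (f x)\<^sup>2}"
      have ind: "\<And>x. indicator {0<..<(f x)\<^sup>2} s = (indicator A x :: ennreal)"
        using True by (simp add: indicator_def A_def)
      have AB: "A \<subseteq> - B" using fB True unfolding A_def by auto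
      have "(\<integral>\<^sup>+x. ennreal (g x) * indicator {0<..<(f x)\<^sup>2} s \<partial>measure_pmf \<nu>)
          = (\<integral>\<^sup>+x. ennreal (g x) * indicator A x \<partial>measure_pmf \<nu>)" by (simp add: ind)
      also have "\<dots> \<le> (if measure_pmf.prob \<nu> A = 0 then 0
         else ennreal (measure_pmf.prob \<nu> A) * gen_inv \<Psi> (ennreal (K / measure_pmf.prob \<nu> A)))"
      proof (cases "measure_pmf.prob \<nu> A = 0")
        case True thus ?thesis by (simp add: null_int)
      next
        case False thus ?thesis using fenchel_bound[OF conj K g0 gK False] by simp
      qed
      also have "\<dots> \<le> ennreal C * capacity p \<mu> A B"
        using ci AB unfolding cap_ineq_def by blast
      also have "\<dots> \<le> ennreal C * dirichlet_form p \<mu> (\<psi> s)"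
      proof (rule mult_left_mono[OF cap_le])
        fix x assume "x \<in> A" thus "\<psi> s x = 1" using True unfolding A_def \<psi>_def by simp
      next
        fix x assume "x \<in> B" thus "\<psi> s x = 0" using True fB unfolding \<psi>_def by simp
      qed simp
      finally show ?thesis using True by simp
    qed
    have "(\<integral>\<^sup>+x. ennreal (\<bar>(f x)\<^sup>2\<bar> * g x) \<partial>measure_pmf \<nu>)
        = (\<integral>\<^sup>+x. \<integral>\<^sup>+s. ennreal (g x) * indicator {0<..<(f x)\<^sup>2} s \<partial>lborel \<partial>measure_pmf \<nu>)"
      by (rule nn_integral_cong) (simp add: layer g0)
    also have "\<dots> = (\<integral>\<^sup>+s. \<integral>\<^sup>+x. ennreal (g x) * indicator {0<..<(f x)\<^sup>2} s \<partial>measure_pmf \<nu> \<partial>lborel)"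
      by (rule fubini_pmf) measurable
    also have "\<dots> \<le> (\<integral>\<^sup>+s. ennreal C * (indicator {0<..} s * dirichlet_form p \<mu> (\<psi> s)) \<partial>lborel)"
      by (rule nn_integral_mono) (rule PB)
    also have "\<dots> = (\<integral>\<^sup>+s. \<integral>\<^sup>+xy. ennreal (C/2) * (indicator {0<..} s *
          ennreal (w xy * (\<psi> s (fst xy) - \<psi> s (snd xy))\<^sup>2)) \<partial>count_space UNIV \<partial>lborel)"
    proof (rule nn_integral_cong)
      fix s :: real
      have "ennreal C * (indicator {0<..} s * dirichlet_form p \<mu> (\<psi> s))
        = ennreal (C/2) * indicator {0<..} s * (\<integral>\<^sup>+xy. ennreal (w xy * (\<psi> s (fst xy) - \<psi> s (snd xy))\<^sup>2) \<partial>count_space UNIV)"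
      proof -
        have "ennreal (C * (1/2)) = ennreal C * ennreal (1/2)" using C by (intro ennreal_mult) auto
        hence e: "ennreal (C/2) = ennreal C * ennreal (1/2)" by simp
        show ?thesis unfolding dirichlet_form_def w_def e by (simp only: mult_ac)
      qed
      also have "\<dots> = (\<integral>\<^sup>+xy. ennreal (C/2) * indicator {0<..} s * ennreal (w xy * (\<psi> s (fst xy) - \<psi> s (snd xy))\<^sup>2) \<partial>count_space UNIV)"
        by (rule nn_integral_cmult[symmetric]) simp
      finally show "ennreal C * (indicator {0<..} s * dirichlet_form p \<mu> (\<psi> s))
        = (\<integral>\<^sup>+xy. ennreal (C/2) * (indicator {0<..} s *
          ennreal (w xy * (\<psi> s (fst xy) - \<psi> s (snd xy))\<^sup>2)) \<partial>count_space UNIV)"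
        by (simp add: mult.assoc)
    qed
    also have "\<dots> = (\<integral>\<^sup>+xy. \<integral>\<^sup>+s. ennreal (C/2) * (indicator {0<..} s *
          ennreal (w xy * (\<psi> s (fst xy) - \<psi> s (snd xy))\<^sup>2)) \<partial>lborel \<partial>count_space UNIV)"
      by (rule nn_integral_count_space_nn_integral) (auto simp: \<psi>_def)
    also have "\<dots> \<le> (\<integral>\<^sup>+xy. ennreal (C/2) * ennreal (w xy * (4*(f (fst xy) - f (snd xy))\<^sup>2)) \<partial>count_space UNIV)"
    proof (rule nn_integral_mono)
      fix xy :: "'a \<times> 'a"
      have "(\<integral>\<^sup>+s. ennreal (C/2) * (indicator {0<..} s *
          ennreal (w xy * (\<psi> s (fst xy) - \<psi> s (snd xy))\<^sup>2)) \<partial>lborel)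
        = ennreal (C/2) * (\<integral>\<^sup>+s. indicator {0<..} s *
          ennreal (w xy * (\<psi> s (fst xy) - \<psi> s (snd xy))\<^sup>2) \<partial>lborel)"
        by (rule nn_integral_cmult) (simp add: \<psi>_def)
      also have "\<dots> \<le> ennreal (C/2) * ennreal (w xy * (4*(f (fst xy) - f (snd xy))\<^sup>2))"
        unfolding \<psi>_def by (rule mult_left_mono[OF pair_bound[OF w0]]) simp
      finally show "(\<integral>\<^sup>+s. ennreal (C/2) * (indicator {0<..} s *
          ennreal (w xy * (\<psi> s (fst xy) - \<psi> s (snd xy))\<^sup>2)) \<partial>lborel)
          \<le> ennreal (C/2) * ennreal (w xy * (4*(f (fst xy) - f (snd xy))\<^sup>2))" .
    qed
    also have "\<dots> = (\<integral>\<^sup>+xy. ennreal (4 * C) * (ennreal (1/2) * ennreal (w xy * (f (fst xy) - f (snd xy))\<^sup>2)) \<partial>count_space UNIV)"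
    proof (rule nn_integral_cong)
      fix xy :: "'a \<times> 'a"
      define d where "d = (f (fst xy) - f (snd xy))\<^sup>2"
      have d0: "0 \<le> d" unfolding d_def by simp
      have a: "ennreal (C/2) * ennreal (w xy * (4*d)) = ennreal (C/2 * (w xy * (4*d)))"
        by (rule ennreal_mult[symmetric]) (use C w0[of xy] d0 in auto)
      have b1: "ennreal (1/2) * ennreal (w xy * d) = ennreal (1/2 * (w xy * d))"
        by (rule ennreal_mult[symmetric]) (use w0[of xy] d0 in auto)
      have b2: "ennreal (4*C) * ennreal (1/2 * (w xy * d)) = ennreal (4*C * (1/2 * (w xy * d)))"
        by (rule ennreal_mult[symmetric]) (use C w0[of xy] d0 in auto)
      have r: "C/2 * (w xy * (4*d)) = 4*C * (1/2 * (w xy * d))" by (simp add: algebra_simps)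
      show "ennreal (C/2) * ennreal (w xy * (4*(f (fst xy) - f (snd xy))\<^sup>2))
        = ennreal (4 * C) * (ennreal (1/2) * ennreal (w xy * (f (fst xy) - f (snd xy))\<^sup>2))"
        unfolding d_def[symmetric] a b1 b2 r ..
    qed
    also have "\<dots> = ennreal (4 * C) * dirichlet_form p \<mu> f"
      unfolding dirichlet_form_def w_def
      by (simp add: nn_integral_cmult mult.assoc)
    finally show "(\<integral>\<^sup>+x. ennreal (\<bar>(f x)\<^sup>2\<bar> * g x) \<partial>measure_pmf \<nu>) \<le> ennreal (4 * C) * dirichlet_form p \<mu> f" .
  qed
qed

theorem mainTheorem8:
  fixes p :: "'a::countable \<Rightarrow> 'a \<Rightarrow> real"
    and \<mu> \<nu> :: "'a pmf"
    and B :: "'a set"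
    and K :: real
    and \<Phi> \<Psi> :: "real \<Rightarrow> ennreal"
  assumes chain: "reversible_chain p \<mu>"
    and B_ne: "B \<noteq> {}"
    and K_pos: "0 < K"
    and young_Phi: "young_function \<Phi>"
    and young_Psi: "young_function \<Psi>"
    and conj: "\<And>r. 0 \<le> r \<Longrightarrow> \<Psi> r = lf_conj \<Phi> r"
  shows "(\<forall>C\<^sub>\<Psi>>0. cap_ineq p \<mu> B \<nu> K \<Psi> C\<^sub>\<Psi> \<longrightarrow> orlicz_ineq p \<mu> B \<nu> K \<Phi> (4 * C\<^sub>\<Psi>))
       \<and> (\<forall>C\<^sub>\<Phi>>0. orlicz_ineq p \<mu> B \<nu> K \<Phi> C\<^sub>\<Phi> \<longrightarrow> cap_ineq p \<mu> B \<nu> K \<Psi> C\<^sub>\<Phi>)"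
proof -
  have p0: "\<And>x y. 0 \<le> p x y" using chain unfolding reversible_chain_def by blast
  have Psi0: "\<Psi> 0 = 0" using young_Psi unfolding young_function_def by blast
  show ?thesis
  proof (intro conjI allI impI)
    fix C :: real assume C: "0 < C" and ci: "cap_ineq p \<mu> B \<nu> K \<Psi> C"
    show "orlicz_ineq p \<mu> B \<nu> K \<Phi> (4 * C)"
      by (rule dir1[OF _ conj K_pos C ci]) (rule p0)
  next
    fix C :: real assume C: "0 < C" and oi: "orlicz_ineq p \<mu> B \<nu> K \<Phi> C"
    show "cap_ineq p \<mu> B \<nu> K \<Psi> C"
      by (rule dir2[OF _ conj Psi0 K_pos C oi]) (rule p0)
  qed
qed


end
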